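(* Let $\mathcal{A}$ be an abelian category. (1) Let $0\to N_1\to N\to N_2\to 0$ be a short exact sequence and $M$ an object of $\mathcal{A}$ such that $N_1$ and $N_2$ are strongly $M$-Rickart. Then $N$ is strongly $M$-Rickart. (2) Let $0\to M_1\to M\to M_2\to 0$ be a short exact sequence and $N$ an object of $\mathcal{A}$ such that $N$ is dual strongly $M_1$-Rickart and dual strongly $M_2$-Rickart. Then $N$ is dual strongly $M$-Rickart.
   Context: A morphism $f:X\to Y$ is a section if $f'f=1_X$ for some $f'$, a retraction if $ff'=1_Y$ for some $f'$. A monomorphism $k:K\to X$ is fully invariant if for every $h:X\to X$ there is $\alpha:K\to K$ with $hk=k\alpha$; an epimorphism $c:X\to C$ is fully coinvariant if for every $h:X\to X$ there is $\gamma:C\to C$ with $ch=\gamma c$. For objects $M,N$: $N$ is strongly $M$-Rickart if the kernel of every morphism $f:M\to N$ is a fully invariant section; $N$ is dual strongly $M$-Rickart if the cokernel of every morphism $f:M\to N$ is a fully coinvariant retraction. *)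

theory Defs
  imports Main
begin

text \<open>A category given by a set of objects, a set of morphisms, domain/codomain
maps, composition (Comp g f = g after f) and identities.\<close>

record ('o, 'm) cat =
  Obj :: "'o set"
  Mor :: "'m set"
  Dom :: "'m \<Rightarrow> 'o"
  Cod :: "'m \<Rightarrow> 'o"
  Comp :: "'m \<Rightarrow> 'm \<Rightarrow> 'm"
  Id :: "'o \<Rightarrow> 'm"

definition hom :: "('o, 'm) cat \<Rightarrow> 'o \<Rightarrow> 'o \<Rightarrow> 'm set" where
  "hom C X Y = {f \<in> Mor C. Dom C f = X \<and> Cod C f = Y}"

definition category :: "('o, 'm) cat \<Rightarrow> bool" where
  "category C \<longleftrightarrow>
     (\<forall>f \<in> Mor C. Dom C f \<in> Obj C \<and> Cod C f \<in> Obj C) \<and>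
     (\<forall>X \<in> Obj C. Id C X \<in> hom C X X) \<and>
     (\<forall>f \<in> Mor C. \<forall>g \<in> Mor C. Dom C g = Cod C f \<longrightarrow>
        Comp C g f \<in> hom C (Dom C f) (Cod C g)) \<and>
     (\<forall>f \<in> Mor C. Comp C (Id C (Cod C f)) f = f \<and> Comp C f (Id C (Dom C f)) = f) \<and>
     (\<forall>f \<in> Mor C. \<forall>g \<in> Mor C. \<forall>h \<in> Mor C. Dom C g = Cod C f \<longrightarrow> Dom C h = Cod C g \<longrightarrow>
        Comp C h (Comp C g f) = Comp C (Comp C h g) f)"

definition mono :: "('o, 'm) cat \<Rightarrow> 'm \<Rightarrow> bool" where
  "mono C f \<longleftrightarrow> f \<in> Mor C \<and>
     (\<forall>g \<in> Mor C. \<forall>h \<in> Mor C. Cod C g = Dom C f \<longrightarrow> Cod C h = Dom C f \<longrightarrow>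
        Dom C g = Dom C h \<longrightarrow> Comp C f g = Comp C f h \<longrightarrow> g = h)"

definition epi :: "('o, 'm) cat \<Rightarrow> 'm \<Rightarrow> bool" where
  "epi C f \<longleftrightarrow> f \<in> Mor C \<and>
     (\<forall>g \<in> Mor C. \<forall>h \<in> Mor C. Dom C g = Cod C f \<longrightarrow> Dom C h = Cod C f \<longrightarrow>
        Cod C g = Cod C h \<longrightarrow> Comp C g f = Comp C h f \<longrightarrow> g = h)"

definition zero_obj :: "('o, 'm) cat \<Rightarrow> 'o \<Rightarrow> bool" where
  "zero_obj C Z \<longleftrightarrow> Z \<in> Obj C \<and>
     (\<forall>X \<in> Obj C. (\<exists>!f. f \<in> hom C X Z) \<and> (\<exists>!f. f \<in> hom C Z X))"

definition zero_mor :: "('o, 'm) cat \<Rightarrow> 'm \<Rightarrow> bool" where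
  "zero_mor C f \<longleftrightarrow> f \<in> Mor C \<and>
     (\<exists>Z u v. zero_obj C Z \<and> u \<in> hom C (Dom C f) Z \<and> v \<in> hom C Z (Cod C f) \<and> f = Comp C v u)"

definition is_kernel :: "('o, 'm) cat \<Rightarrow> 'm \<Rightarrow> 'm \<Rightarrow> bool" where
  "is_kernel C k f \<longleftrightarrow> f \<in> Mor C \<and> k \<in> Mor C \<and> Cod C k = Dom C f \<and>
     zero_mor C (Comp C f k) \<and>
     (\<forall>g \<in> Mor C. Cod C g = Dom C f \<longrightarrow> zero_mor C (Comp C f g) \<longrightarrow>
        (\<exists>!u. u \<in> hom C (Dom C g) (Dom C k) \<and> Comp C k u = g))"

definition is_cokernel :: "('o, 'm) cat \<Rightarrow> 'm \<Rightarrow> 'm \<Rightarrow> bool" where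
  "is_cokernel C c f \<longleftrightarrow> f \<in> Mor C \<and> c \<in> Mor C \<and> Dom C c = Cod C f \<and>
     zero_mor C (Comp C c f) \<and>
     (\<forall>g \<in> Mor C. Dom C g = Cod C f \<longrightarrow> zero_mor C (Comp C g f) \<longrightarrow>
        (\<exists>!u. u \<in> hom C (Cod C c) (Cod C g) \<and> Comp C u c = g))"

definition has_binary_products :: "('o, 'm) cat \<Rightarrow> bool" where
  "has_binary_products C \<longleftrightarrow> (\<forall>X \<in> Obj C. \<forall>Y \<in> Obj C. \<exists>P p1 p2.
     p1 \<in> hom C P X \<and> p2 \<in> hom C P Y \<and>
     (\<forall>W \<in> Obj C. \<forall>f1 \<in> hom C W X. \<forall>f2 \<in> hom C W Y.
        \<exists>!u. u \<in> hom C W P \<and> Comp C p1 u = f1 \<and> Comp C p2 u = f2))"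

definition has_binary_coproducts :: "('o, 'm) cat \<Rightarrow> bool" where
  "has_binary_coproducts C \<longleftrightarrow> (\<forall>X \<in> Obj C. \<forall>Y \<in> Obj C. \<exists>S i1 i2.
     i1 \<in> hom C X S \<and> i2 \<in> hom C Y S \<and>
     (\<forall>W \<in> Obj C. \<forall>f1 \<in> hom C X W. \<forall>f2 \<in> hom C Y W.
        \<exists>!u. u \<in> hom C S W \<and> Comp C u i1 = f1 \<and> Comp C u i2 = f2))"

text \<open>Abelian category (Freyd's definition): a category with a zero object, binary
products and coproducts, kernels and cokernels of all morphisms, in which every
monomorphism is a kernel and every epimorphism is a cokernel.\<close>
definition abelian :: "('o, 'm) cat \<Rightarrow> bool" where
  "abelian C \<longleftrightarrow> category C \<and> (\<exists>Z. zero_obj C Z) \<and>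
     has_binary_products C \<and> has_binary_coproducts C \<and>
     (\<forall>f \<in> Mor C. \<exists>k. is_kernel C k f) \<and>
     (\<forall>f \<in> Mor C. \<exists>c. is_cokernel C c f) \<and>
     (\<forall>f. mono C f \<longrightarrow> (\<exists>g. is_kernel C f g)) \<and>
     (\<forall>f. epi C f \<longrightarrow> (\<exists>g. is_cokernel C f g))"

definition is_section :: "('o, 'm) cat \<Rightarrow> 'm \<Rightarrow> bool" where
  "is_section C f \<longleftrightarrow> f \<in> Mor C \<and>
     (\<exists>f' \<in> hom C (Cod C f) (Dom C f). Comp C f' f = Id C (Dom C f))"

definition is_retraction :: "('o, 'm) cat \<Rightarrow> 'm \<Rightarrow> bool" where
  "is_retraction C f \<longleftrightarrow> f \<in> Mor C \<and>
     (\<exists>f' \<in> hom C (Cod C f) (Dom C f). Comp C f f' = Id C (Cod C f))"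

definition fully_invariant :: "('o, 'm) cat \<Rightarrow> 'm \<Rightarrow> bool" where
  "fully_invariant C k \<longleftrightarrow> mono C k \<and>
     (\<forall>h \<in> hom C (Cod C k) (Cod C k). \<exists>\<alpha> \<in> hom C (Dom C k) (Dom C k).
        Comp C h k = Comp C k \<alpha>)"

definition fully_coinvariant :: "('o, 'm) cat \<Rightarrow> 'm \<Rightarrow> bool" where
  "fully_coinvariant C c \<longleftrightarrow> epi C c \<and>
     (\<forall>h \<in> hom C (Dom C c) (Dom C c). \<exists>\<gamma> \<in> hom C (Cod C c) (Cod C c).
        Comp C c h = Comp C \<gamma> c)"

definition strongly_rickart :: "('o, 'm) cat \<Rightarrow> 'o \<Rightarrow> 'o \<Rightarrow> bool" where
  "strongly_rickart C M N \<longleftrightarrow> (\<forall>f \<in> hom C M N. \<forall>k. is_kernel C k f \<longrightarrow>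
     fully_invariant C k \<and> is_section C k)"

definition dual_strongly_rickart :: "('o, 'm) cat \<Rightarrow> 'o \<Rightarrow> 'o \<Rightarrow> bool" where
  "dual_strongly_rickart C M N \<longleftrightarrow> (\<forall>f \<in> hom C M N. \<forall>c. is_cokernel C c f \<longrightarrow>
     fully_coinvariant C c \<and> is_retraction C c)"

definition short_exact :: "('o, 'm) cat \<Rightarrow> 'm \<Rightarrow> 'm \<Rightarrow> bool" where
  "short_exact C a b \<longleftrightarrow> a \<in> Mor C \<and> b \<in> Mor C \<and> Cod C a = Dom C b \<and>
     mono C a \<and> epi C b \<and> is_kernel C a b"

end

theory Submission
  imports Defs
begin

lemma hom_iff: "f \<in> hom C X Y \<longleftrightarrow> f \<in> Mor C \<and> Dom C f = X \<and> Cod C f = Y"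
  by (simp add: hom_def)

lemma mor_hom: "f \<in> Mor C \<Longrightarrow> f \<in> hom C (Dom C f) (Cod C f)"
  by (simp add: hom_def)

lemma catD:
  assumes "category C"
  shows "\<forall>f \<in> Mor C. Dom C f \<in> Obj C \<and> Cod C f \<in> Obj C"
    "\<forall>X \<in> Obj C. Id C X \<in> hom C X X"
    "\<forall>f \<in> Mor C. \<forall>g \<in> Mor C. Dom C g = Cod C f \<longrightarrow>
        Comp C g f \<in> hom C (Dom C f) (Cod C g)"
    "\<forall>f \<in> Mor C. Comp C (Id C (Cod C f)) f = f \<and> Comp C f (Id C (Dom C f)) = f"
    "\<forall>f \<in> Mor C. \<forall>g \<in> Mor C. \<forall>h \<in> Mor C. Dom C g = Cod C f \<longrightarrow> Dom C h = Cod C g \<longrightarrow>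
        Comp C h (Comp C g f) = Comp C (Comp C h g) f"
  using assms unfolding category_def by blast+

lemma comp_hom:
  assumes "category C" "f \<in> hom C X Y" "g \<in> hom C Y Z"
  shows "Comp C g f \<in> hom C X Z"
proof -
  have "f \<in> Mor C" "g \<in> Mor C" "Dom C g = Cod C f" "Dom C f = X" "Cod C g = Z"
    using assms(2,3) by (auto simp: hom_def)
  then show ?thesis using catD(3)[OF assms(1)] by metis
qed

lemma id_hom: "category C \<Longrightarrow> X \<in> Obj C \<Longrightarrow> Id C X \<in> hom C X X"
  using catD(2) by blast

lemma obj_dom: "category C \<Longrightarrow> f \<in> hom C X Y \<Longrightarrow> X \<in> Obj C"
  using catD(1) unfolding hom_def by blast

lemma obj_cod: "category C \<Longrightarrow> f \<in> hom C X Y \<Longrightarrow> Y \<in> Obj C"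
  using catD(1) unfolding hom_def by blast

lemma id_left: "category C \<Longrightarrow> f \<in> hom C X Y \<Longrightarrow> Comp C (Id C Y) f = f"
  using catD(4) unfolding hom_def by blast

lemma id_right: "category C \<Longrightarrow> f \<in> hom C X Y \<Longrightarrow> Comp C f (Id C X) = f"
  using catD(4) unfolding hom_def by blast

lemma assoc:
  assumes "category C" "f \<in> hom C X Y" "g \<in> hom C Y Z" "h \<in> hom C Z W"
  shows "Comp C h (Comp C g f) = Comp C (Comp C h g) f"
proof -
  have "f \<in> Mor C" "g \<in> Mor C" "h \<in> Mor C" "Dom C g = Cod C f" "Dom C h = Cod C g"
    using assms(2-4) by (auto simp: hom_def)
  then show ?thesis using catD(5)[OF assms(1)] by blast
qed

lemma zero_morI:
  assumes "zero_obj C Z" "u \<in> hom C X Z" "v \<in> hom C Z Y" "f = Comp C v u" "f \<in> hom C X Y"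
  shows "zero_mor C f"
proof -
  have "f \<in> Mor C" "Dom C f = X" "Cod C f = Y" using assms(5) by (simp_all add: hom_def)
  then show ?thesis unfolding zero_mor_def using assms(1-4) by blast
qed

lemma zero_morE:
  assumes "zero_mor C f" "f \<in> hom C X Y"
  obtains Z u v where "zero_obj C Z" "u \<in> hom C X Z" "v \<in> hom C Z Y" "f = Comp C v u"
proof -
  have "Dom C f = X" "Cod C f = Y" using assms(2) by (simp_all add: hom_def)
  then show ?thesis using assms(1) that unfolding zero_mor_def by blast
qed

lemma zero_comp_left:
  assumes C: "category C" and z: "zero_mor C f" and f: "f \<in> hom C X Y" and g: "g \<in> hom C Y W"
  shows "zero_mor C (Comp C g f)"
proof -
  obtain Z u v where Z: "zero_obj C Z" and u: "u \<in> hom C X Z" and v: "v \<in> hom C Z Y"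
    and fe: "f = Comp C v u" using zero_morE[OF z f] by blast
  have gv: "Comp C g v \<in> hom C Z W" using comp_hom[OF C v g] .
  have "Comp C g f = Comp C (Comp C g v) u" using assoc[OF C u v g] fe by simp
  moreover have "Comp C g f \<in> hom C X W" using comp_hom[OF C f g] .
  ultimately show ?thesis using zero_morI[OF Z u gv] by blast
qed

lemma zero_comp_right:
  assumes C: "category C" and z: "zero_mor C f" and f: "f \<in> hom C X Y" and g: "g \<in> hom C W X"
  shows "zero_mor C (Comp C f g)"
proof -
  obtain Z u v where Z: "zero_obj C Z" and u: "u \<in> hom C X Z" and v: "v \<in> hom C Z Y"
    and fe: "f = Comp C v u" using zero_morE[OF z f] by blast
  have ug: "Comp C u g \<in> hom C W Z" using comp_hom[OF C g u] .
  have "Comp C f g = Comp C v (Comp C u g)" using assoc[OF C g u v] fe by simp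
  moreover have "Comp C f g \<in> hom C W Y" using comp_hom[OF C g f] .
  ultimately show ?thesis using zero_morI[OF Z ug v] by blast
qed

lemma ex1_same: "\<exists>!x. P x \<Longrightarrow> P a \<Longrightarrow> P b \<Longrightarrow> a = b"
  by metis

lemma zero_objD:
  assumes "zero_obj C Z" "X \<in> Obj C"
  shows "\<exists>!f. f \<in> hom C X Z" "\<exists>!f. f \<in> hom C Z X"
proof -
  have "\<forall>X \<in> Obj C. (\<exists>!f. f \<in> hom C X Z) \<and> (\<exists>!f. f \<in> hom C Z X)"
    using assms(1) unfolding zero_obj_def by (rule conjunct2)
  then have "(\<exists>!f. f \<in> hom C X Z) \<and> (\<exists>!f. f \<in> hom C Z X)" using assms(2) by (rule bspec)
  then show "\<exists>!f. f \<in> hom C X Z" "\<exists>!f. f \<in> hom C Z X" by (rule conjunct1, rule conjunct2)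
qed

lemma zero_obj_obj: "zero_obj C Z \<Longrightarrow> Z \<in> Obj C"
  unfolding zero_obj_def by (rule conjunct1)

lemma zero_obj_unique_to:
  "zero_obj C Z \<Longrightarrow> X \<in> Obj C \<Longrightarrow> u \<in> hom C X Z \<Longrightarrow> u' \<in> hom C X Z \<Longrightarrow> u = u'"
  using zero_objD(1) ex1_same by metis

lemma zero_obj_unique_from:
  "zero_obj C Z \<Longrightarrow> X \<in> Obj C \<Longrightarrow> u \<in> hom C Z X \<Longrightarrow> u' \<in> hom C Z X \<Longrightarrow> u = u'"
  using zero_objD(2) ex1_same by metis

lemma zero_obj_ex_to:
  "zero_obj C Z \<Longrightarrow> X \<in> Obj C \<Longrightarrow> \<exists>u. u \<in> hom C X Z"
  using zero_objD(1) by (metis ex1_implies_ex)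

lemma zero_obj_ex_from:
  "zero_obj C Z \<Longrightarrow> X \<in> Obj C \<Longrightarrow> \<exists>u. u \<in> hom C Z X"
  using zero_objD(2) by (metis ex1_implies_ex)

lemma zero_unique:
  assumes C: "category C" and zf: "zero_mor C f" and zg: "zero_mor C g"
    and f: "f \<in> hom C X Y" and g: "g \<in> hom C X Y"
  shows "f = g"
proof -
  obtain Z u v where Z: "zero_obj C Z" and u: "u \<in> hom C X Z" and v: "v \<in> hom C Z Y"
    and fe: "f = Comp C v u" using zero_morE[OF zf f] by blast
  obtain Z' u' v' where Z': "zero_obj C Z'" and u': "u' \<in> hom C X Z'" and v': "v' \<in> hom C Z' Y"
    and ge: "g = Comp C v' u'" using zero_morE[OF zg g] by blast
  have ZO: "Z \<in> Obj C" using zero_obj_obj[OF Z] .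
  have ZO': "Z' \<in> Obj C" using zero_obj_obj[OF Z'] .
  have XO: "X \<in> Obj C" using obj_dom[OF C f] .
  have YO: "Y \<in> Obj C" using obj_cod[OF C f] .
  obtain w where w: "w \<in> hom C Z Z'" using zero_obj_ex_to[OF Z' ZO] by blast
  have wu: "Comp C w u \<in> hom C X Z'" using comp_hom[OF C u w] .
  have vw: "Comp C v' w \<in> hom C Z Y" using comp_hom[OF C w v'] .
  have e1: "Comp C w u = u'" using zero_obj_unique_to[OF Z' XO wu u'] .
  have e2: "Comp C v' w = v" using zero_obj_unique_from[OF Z YO vw v] .
  have "g = Comp C v' (Comp C w u)" using ge e1 by simp
  also have "\<dots> = Comp C (Comp C v' w) u" using assoc[OF C u w v'] .
  also have "\<dots> = f" using e2 fe by simp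
  finally show ?thesis by simp
qed

lemma zero_exists:
  assumes C: "category C" and Z: "zero_obj C Z" and X: "X \<in> Obj C" and Y: "Y \<in> Obj C"
  shows "\<exists>z. z \<in> hom C X Y \<and> zero_mor C z"
proof -
  obtain u where u: "u \<in> hom C X Z" using zero_obj_ex_to[OF Z X] by blast
  obtain v where v: "v \<in> hom C Z Y" using zero_obj_ex_from[OF Z Y] by blast
  have h: "Comp C v u \<in> hom C X Y" using comp_hom[OF C u v] .
  then have "zero_mor C (Comp C v u)" using zero_morI[OF Z u v] by blast
  with h show ?thesis by blast
qed

lemma monoD:
  assumes m: "mono C a" and a: "a \<in> hom C Y W" and g: "g \<in> hom C X Y" and h: "h \<in> hom C X Y"
    and e: "Comp C a g = Comp C a h"
  shows "g = h"
proof -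
  have M: "\<forall>g \<in> Mor C. \<forall>h \<in> Mor C. Cod C g = Dom C a \<longrightarrow> Cod C h = Dom C a \<longrightarrow>
        Dom C g = Dom C h \<longrightarrow> Comp C a g = Comp C a h \<longrightarrow> g = h" using m unfolding mono_def by blast
  have "g \<in> Mor C" "h \<in> Mor C" "Cod C g = Dom C a" "Cod C h = Dom C a" "Dom C g = Dom C h"
    using a g h by (simp_all add: hom_def)
  then show ?thesis using M e by blast
qed

lemma epiD:
  assumes m: "epi C a" and a: "a \<in> hom C X Y" and g: "g \<in> hom C Y W" and h: "h \<in> hom C Y W"
    and e: "Comp C g a = Comp C h a"
  shows "g = h"
proof -
  have M: "\<forall>g \<in> Mor C. \<forall>h \<in> Mor C. Dom C g = Cod C a \<longrightarrow> Dom C h = Cod C a \<longrightarrow>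
        Cod C g = Cod C h \<longrightarrow> Comp C g a = Comp C h a \<longrightarrow> g = h" using m unfolding epi_def by blast
  have "g \<in> Mor C" "h \<in> Mor C" "Dom C g = Cod C a" "Dom C h = Cod C a" "Cod C g = Cod C h"
    using a g h by (simp_all add: hom_def)
  then show ?thesis using M e by blast
qed

lemma mono_zero:
  assumes C: "category C" and Z: "\<exists>Z. zero_obj C Z" and m: "mono C a" and a: "a \<in> hom C Y W"
    and g: "g \<in> hom C X Y" and z: "zero_mor C (Comp C a g)"
  shows "zero_mor C g"
proof -
  obtain Z where Z: "zero_obj C Z" using Z by blast
  obtain z where zz: "z \<in> hom C X Y" "zero_mor C z"
    using zero_exists[OF C Z obj_dom[OF C g] obj_cod[OF C g]] by blast
  have "zero_mor C (Comp C a z)" using zero_comp_left[OF C zz(2) zz(1) a] .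
  then have "Comp C a g = Comp C a z"
    using zero_unique[OF C z _ comp_hom[OF C g a] comp_hom[OF C zz(1) a]] by simp
  then have "g = z" using monoD[OF m a g zz(1)] by simp
  with zz show ?thesis by simp
qed

lemma kernelD:
  assumes "is_kernel C k f"
  shows "f \<in> Mor C" "k \<in> Mor C" "Cod C k = Dom C f" "zero_mor C (Comp C f k)"
    "\<forall>g \<in> Mor C. Cod C g = Dom C f \<longrightarrow> zero_mor C (Comp C f g) \<longrightarrow>
        (\<exists>!u. u \<in> hom C (Dom C g) (Dom C k) \<and> Comp C k u = g)"
  using assms unfolding is_kernel_def by blast+

lemma kernel_factor:
  assumes k: "is_kernel C k f" and f: "f \<in> hom C X Y" and g: "g \<in> hom C W X"
    and z: "zero_mor C (Comp C f g)"
  shows "\<exists>u. u \<in> hom C W (Dom C k) \<and> Comp C k u = g"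
proof -
  have "g \<in> Mor C" "Cod C g = Dom C f" "Dom C g = W" using f g by (simp_all add: hom_def)
  then have "\<exists>!u. u \<in> hom C W (Dom C k) \<and> Comp C k u = g" using kernelD(5)[OF k] z by metis
  then show ?thesis by (rule ex1_implies_ex)
qed

lemma kernel_hom: "is_kernel C k f \<Longrightarrow> f \<in> hom C X Y \<Longrightarrow> k \<in> hom C (Dom C k) X"
  using kernelD(2,3) unfolding hom_def by (metis (mono_tags, lifting) mem_Collect_eq)

lemma kernel_zero: "is_kernel C k f \<Longrightarrow> zero_mor C (Comp C f k)"
  by (rule kernelD(4))

lemma kernel_mono:
  assumes C: "category C" and k: "is_kernel C k f"
  shows "mono C k"
proof -
  have f: "f \<in> hom C (Dom C f) (Cod C f)" using kernelD(1)[OF k] by (rule mor_hom)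
  have kh: "k \<in> hom C (Dom C k) (Dom C f)" using kernel_hom[OF k f] .
  show ?thesis unfolding mono_def
  proof (intro conjI ballI impI)
    show "k \<in> Mor C" using kh by (simp add: hom_def)
    fix g h assume g: "g \<in> Mor C" and h: "h \<in> Mor C" and cg: "Cod C g = Dom C k"
      and ch: "Cod C h = Dom C k" and dd: "Dom C g = Dom C h" and e: "Comp C k g = Comp C k h"
    have gh: "g \<in> hom C (Dom C g) (Dom C k)" using g cg by (simp add: hom_def)
    have hh: "h \<in> hom C (Dom C g) (Dom C k)" using h ch dd by (simp add: hom_def)
    have kg: "Comp C k g \<in> hom C (Dom C g) (Dom C f)" using comp_hom[OF C gh kh] .
    have "zero_mor C (Comp C f (Comp C k g))"
    proof -
      have "zero_mor C (Comp C (Comp C f k) g)"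
        using zero_comp_right[OF C kernel_zero[OF k] comp_hom[OF C kh f] gh] .
      then show ?thesis using assoc[OF C gh kh f] by simp
    qed
    note Z = this
    have K: "\<forall>g\<in>Mor C. Cod C g = Dom C f \<longrightarrow> zero_mor C (Comp C f g) \<longrightarrow>
        (\<exists>!u. u \<in> hom C (Dom C g) (Dom C k) \<and> Comp C k u = g)"
      using kernelD(5)[OF k] .
    have m1: "Comp C k g \<in> Mor C" and m2: "Cod C (Comp C k g) = Dom C f"
      and m3: "Dom C (Comp C k g) = Dom C g"
      using kg by (simp_all add: hom_def)
    have U0: "\<exists>!u. u \<in> hom C (Dom C (Comp C k g)) (Dom C k) \<and> Comp C k u = Comp C k g"
      by (rule K[rule_format, OF m1 m2 Z])
    then have U: "\<exists>!u. u \<in> hom C (Dom C g) (Dom C k) \<and> Comp C k u = Comp C k g"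
      by (simp only: m3)
    show "g = h" by (rule ex1_same[OF U]) (simp_all add: gh hh e)
  qed
qed

lemma srD:
  assumes "strongly_rickart C M N" "f \<in> hom C M N" "is_kernel C k f"
  shows "fully_invariant C k" "is_section C k"
  using assms unfolding strongly_rickart_def by blast+

lemma sectionE:
  assumes "is_section C k" "k \<in> hom C K M"
  obtains r where "r \<in> hom C M K" "Comp C r k = Id C K"
  using assms unfolding is_section_def hom_def by auto

lemma fiE:
  assumes "fully_invariant C k" "k \<in> hom C K M" "h \<in> hom C M M"
  obtains \<alpha> where "\<alpha> \<in> hom C K K" "Comp C h k = Comp C k \<alpha>"
proof -
  have "\<forall>h \<in> hom C (Cod C k) (Cod C k). \<exists>\<alpha> \<in> hom C (Dom C k) (Dom C k).
        Comp C h k = Comp C k \<alpha>" using assms(1) unfolding fully_invariant_def by (rule conjunct2)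
  moreover have "Cod C k = M" "Dom C k = K" using assms(2) by (simp_all add: hom_def)
  ultimately show ?thesis using assms(3) that by metis
qed

lemma core:
  assumes C: "category C" and ZZ: "\<exists>Z. zero_obj C Z"
    and ker: "\<forall>f \<in> Mor C. \<exists>k. is_kernel C k f"
    and ab: "is_kernel C a b"
    and SR1: "strongly_rickart C M (Dom C a)" and SR2: "strongly_rickart C M (Cod C b)"
  shows "strongly_rickart C M (Cod C a)"
  unfolding strongly_rickart_def
proof (intro ballI allI impI)
  define N1 where "N1 = Dom C a"
  define N where "N = Cod C a"
  define N2 where "N2 = Cod C b"
  have bh: "b \<in> hom C N N2" using kernelD[OF ab] unfolding N_def N2_def hom_def by simp
  have ah: "a \<in> hom C N1 N" using kernel_hom[OF ab bh] kernelD(3)[OF ab] bh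
    unfolding N1_def N_def hom_def by simp
  have am: "mono C a" using kernel_mono[OF C ab] .
  fix f k assume fh: "f \<in> hom C M N" and kf: "is_kernel C k f"
  define K where "K = Dom C k"
  have kh: "k \<in> hom C K M" using kernel_hom[OF kf fh] unfolding K_def .
  have km: "mono C k" using kernel_mono[OF C kf] .
  have bf: "Comp C b f \<in> hom C M N2" using comp_hom[OF C fh bh] .
  obtain k1 where k1: "is_kernel C k1 (Comp C b f)"
    using ker bf unfolding hom_def by blast
  define K1 where "K1 = Dom C k1"
  have k1h: "k1 \<in> hom C K1 M" using kernel_hom[OF k1 bf] unfolding K1_def .
  have fi1: "fully_invariant C k1" using srD(1)[OF SR2 bf[unfolded N2_def] k1] .
  obtain r1 where r1: "r1 \<in> hom C M K1" "Comp C r1 k1 = Id C K1"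
    using sectionE[OF srD(2)[OF SR2 bf[unfolded N2_def] k1] k1h] by blast
  have fk1: "Comp C f k1 \<in> hom C K1 N" using comp_hom[OF C k1h fh] .
  have "zero_mor C (Comp C b (Comp C f k1))"
    using kernel_zero[OF k1] assoc[OF C k1h fh bh] by simp
  then obtain g1 where g1: "g1 \<in> hom C K1 N1" "Comp C a g1 = Comp C f k1"
    using kernel_factor[OF ab bh fk1] unfolding N1_def by blast
  define g' where "g' = Comp C g1 r1"
  have g'h: "g' \<in> hom C M N1" unfolding g'_def using comp_hom[OF C r1(1) g1(1)] .
  obtain k2 where k2: "is_kernel C k2 g'"
    using ker g'h unfolding hom_def by blast
  define K2 where "K2 = Dom C k2"
  have k2h: "k2 \<in> hom C K2 M" using kernel_hom[OF k2 g'h] unfolding K2_def .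
  have fi2: "fully_invariant C k2" using srD(1)[OF SR1 g'h[unfolded N1_def] k2] .
  obtain r2 where r2: "r2 \<in> hom C M K2" "Comp C r2 k2 = Id C K2"
    using sectionE[OF srD(2)[OF SR1 g'h[unfolded N1_def] k2] k2h] by blast
  have g'k2: "zero_mor C (Comp C g' k2)" using kernel_zero[OF k2] .
  define e1 where "e1 = Comp C k1 r1"
  define e2 where "e2 = Comp C k2 r2"
  have e1h: "e1 \<in> hom C M M" unfolding e1_def using comp_hom[OF C r1(1) k1h] .
  have e2h: "e2 \<in> hom C M M" unfolding e2_def using comp_hom[OF C r2(1) k2h] .
  have fe1: "Comp C f e1 = Comp C a g'"
  proof -
    have "Comp C f e1 = Comp C (Comp C f k1) r1" unfolding e1_def using assoc[OF C r1(1) k1h fh] .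
    also have "\<dots> = Comp C (Comp C a g1) r1" using g1(2) by simp
    also have "\<dots> = Comp C a g'" unfolding g'_def using assoc[OF C r1(1) g1(1) ah] by simp
    finally show ?thesis .
  qed
  have fix1: "Comp C e1 x = x" if x: "x \<in> hom C W M" and w: "w \<in> hom C W K1" and xe: "Comp C k1 w = x" for x w W
  proof -
    have "Comp C e1 x = Comp C k1 (Comp C r1 (Comp C k1 w))"
      unfolding e1_def using assoc[OF C comp_hom[OF C w k1h] r1(1) k1h] xe by simp
    also have "\<dots> = Comp C k1 (Comp C (Comp C r1 k1) w)" using assoc[OF C w k1h r1(1)] by simp
    also have "\<dots> = x" using r1(2) id_left[OF C w] xe by simp
    finally show ?thesis .
  qed
  have fix2: "Comp C e2 x = x" if x: "x \<in> hom C W M" and w: "w \<in> hom C W K2" and xe: "Comp C k2 w = x" for x w W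
  proof -
    have "Comp C e2 x = Comp C k2 (Comp C r2 (Comp C k2 w))"
      unfolding e2_def using assoc[OF C comp_hom[OF C w k2h] r2(1) k2h] xe by simp
    also have "\<dots> = Comp C k2 (Comp C (Comp C r2 k2) w)" using assoc[OF C w k2h r2(1)] by simp
    also have "\<dots> = x" using r2(2) id_left[OF C w] xe by simp
    finally show ?thesis .
  qed
  have thr1: "\<exists>w. w \<in> hom C W K1 \<and> Comp C k1 w = x" if x: "x \<in> hom C W M"
    and z: "zero_mor C (Comp C f x)" for x W
  proof -
    have "zero_mor C (Comp C b (Comp C f x))"
      using zero_comp_left[OF C z comp_hom[OF C x fh] bh] .
    then have "zero_mor C (Comp C (Comp C b f) x)" using assoc[OF C x fh bh] by simp
    then show ?thesis using kernel_factor[OF k1 bf x] unfolding K1_def by blast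
  qed
  have thr2: "\<exists>w. w \<in> hom C W K2 \<and> Comp C k2 w = x" if x: "x \<in> hom C W M"
    and z: "zero_mor C (Comp C f x)" for x W
  proof -
    obtain w where w: "w \<in> hom C W K1" "Comp C k1 w = x" using thr1[OF x z] by blast
    have "Comp C a (Comp C g' x) = Comp C (Comp C a g') x" using assoc[OF C x g'h ah] .
    also have "\<dots> = Comp C (Comp C f e1) x" using fe1 by simp
    also have "\<dots> = Comp C f (Comp C e1 x)" using assoc[OF C x e1h fh] by simp
    also have "\<dots> = Comp C f x" using fix1[OF x w(1) w(2)] by simp
    finally have "zero_mor C (Comp C a (Comp C g' x))" using z by simp
    then have "zero_mor C (Comp C g' x)" using mono_zero[OF C ZZ am ah comp_hom[OF C x g'h]] by simp
    then show ?thesis using kernel_factor[OF k2 g'h x] unfolding K2_def by blast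
  qed
  have fk: "zero_mor C (Comp C f k)" using kernel_zero[OF kf] .
  obtain u where u: "u \<in> hom C K K1" "Comp C k1 u = k" using thr1[OF kh fk] by blast
  obtain v where v: "v \<in> hom C K K2" "Comp C k2 v = k" using thr2[OF kh fk] by blast
  have e1k: "Comp C e1 k = k" using fix1[OF kh u(1) u(2)] .
  have e2k: "Comp C e2 k = k" using fix2[OF kh v(1) v(2)] .
  have kill: "zero_mor C (Comp C f x)" if x: "x \<in> hom C W M" and w: "w \<in> hom C W K2"
    and xe: "Comp C k2 w = x" and fx: "Comp C e1 x = x" for x w W
  proof -
    have "Comp C f x = Comp C (Comp C f e1) x" using fx assoc[OF C x e1h fh] by simp
    also have "\<dots> = Comp C (Comp C a g') (Comp C k2 w)" using fe1 xe by simp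
    also have "\<dots> = Comp C a (Comp C (Comp C g' k2) w)"
      using assoc[OF C comp_hom[OF C w k2h] g'h ah] assoc[OF C w k2h g'h] by simp
    finally have eq: "Comp C f x = Comp C a (Comp C (Comp C g' k2) w)" .
    have "zero_mor C (Comp C (Comp C g' k2) w)"
      using zero_comp_right[OF C g'k2 comp_hom[OF C k2h g'h] w] .
    then have "zero_mor C (Comp C a (Comp C (Comp C g' k2) w))"
      using zero_comp_left[OF C _ comp_hom[OF C w comp_hom[OF C k2h g'h]] ah] by simp
    then show ?thesis using eq by simp
  qed
  show "fully_invariant C k \<and> is_section C k"
  proof
    show "fully_invariant C k" unfolding fully_invariant_def
    proof (intro conjI ballI)
      show "mono C k" by (rule km)
      fix h assume h0: "h \<in> hom C (Cod C k) (Cod C k)"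
      have h: "h \<in> hom C M M" using h0 kh by (simp add: hom_def)
      obtain \<alpha>1 where a1: "\<alpha>1 \<in> hom C K1 K1" "Comp C h k1 = Comp C k1 \<alpha>1" using fiE[OF fi1 k1h h] .
      obtain \<alpha>2 where a2: "\<alpha>2 \<in> hom C K2 K2" "Comp C h k2 = Comp C k2 \<alpha>2" using fiE[OF fi2 k2h h] .
      have hk: "Comp C h k \<in> hom C K M" using comp_hom[OF C kh h] .
      have w1: "Comp C \<alpha>1 u \<in> hom C K K1" using comp_hom[OF C u(1) a1(1)] .
      have w2: "Comp C \<alpha>2 v \<in> hom C K K2" using comp_hom[OF C v(1) a2(1)] .
      have q1: "Comp C k1 (Comp C \<alpha>1 u) = Comp C h k"
        using assoc[OF C u(1) a1(1) k1h] a1(2) assoc[OF C u(1) k1h h] u(2) by simp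
      have q2: "Comp C k2 (Comp C \<alpha>2 v) = Comp C h k"
        using assoc[OF C v(1) a2(1) k2h] a2(2) assoc[OF C v(1) k2h h] v(2) by simp
      have "zero_mor C (Comp C f (Comp C h k))"
        using kill[OF hk w2 q2 fix1[OF hk w1 q1]] .
      then obtain \<alpha> where "\<alpha> \<in> hom C K K" "Comp C k \<alpha> = Comp C h k"
        using kernel_factor[OF kf fh hk] unfolding K_def by blast
      moreover have "Dom C k = K" using kh by (simp add: hom_def)
      ultimately show "\<exists>\<alpha>\<in>hom C (Dom C k) (Dom C k). Comp C h k = Comp C k \<alpha>" by metis
    qed
  next
    have e12: "Comp C e1 e2 \<in> hom C M M" using comp_hom[OF C e2h e1h] .
    have "Comp C e1 e2 = Comp C k1 (Comp C r1 e2)" unfolding e1_def using assoc[OF C e2h r1(1) k1h] by simp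
    have "zero_mor C (Comp C f (Comp C e1 e2))"
    proof -
      have "Comp C f (Comp C e1 e2) = Comp C (Comp C f e1) e2" using assoc[OF C e2h e1h fh] .
      also have "\<dots> = Comp C (Comp C a g') (Comp C k2 r2)" using fe1 e2_def by simp
      also have "\<dots> = Comp C a (Comp C (Comp C g' k2) r2)"
        using assoc[OF C comp_hom[OF C r2(1) k2h] g'h ah] assoc[OF C r2(1) k2h g'h] by simp
      finally have eq: "Comp C f (Comp C e1 e2) = Comp C a (Comp C (Comp C g' k2) r2)" .
      have "zero_mor C (Comp C (Comp C g' k2) r2)"
        using zero_comp_right[OF C g'k2 comp_hom[OF C k2h g'h] r2(1)] .
      then have "zero_mor C (Comp C a (Comp C (Comp C g' k2) r2))"
        using zero_comp_left[OF C _ comp_hom[OF C r2(1) comp_hom[OF C k2h g'h]] ah] by simp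
      then show ?thesis using eq by simp
    qed
    then obtain p where p: "p \<in> hom C M K" "Comp C k p = Comp C e1 e2"
      using kernel_factor[OF kf fh e12] unfolding K_def by blast
    have "Comp C k (Comp C p k) = Comp C k (Id C K)"
    proof -
      have "Comp C k (Comp C p k) = Comp C (Comp C e1 e2) k" using assoc[OF C kh p(1) kh] p(2) by simp
      also have "\<dots> = Comp C e1 (Comp C e2 k)" using assoc[OF C kh e2h e1h] by simp
      also have "\<dots> = k" using e1k e2k by simp
      also have "\<dots> = Comp C k (Id C K)" using id_right[OF C kh] by simp
      finally show ?thesis .
    qed
    then have pk: "Comp C p k = Id C K"
      using monoD[OF km kh comp_hom[OF C kh p(1)] id_hom[OF C obj_dom[OF C kh]]] by simp
    show "is_section C k" unfolding is_section_def
      using p(1) pk kh by (auto simp: hom_def)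
  qed
qed

definition opc :: "('o, 'm) cat \<Rightarrow> ('o, 'm) cat" where
  "opc C = \<lparr>Obj = Obj C, Mor = Mor C, Dom = Cod C, Cod = Dom C,
     Comp = (\<lambda>g f. Comp C f g), Id = Id C\<rparr>"

lemma opc_simps[simp]: "Obj (opc C) = Obj C" "Mor (opc C) = Mor C" "Dom (opc C) = Cod C"
  "Cod (opc C) = Dom C" "Comp (opc C) g f = Comp C f g" "Id (opc C) = Id C"
  by (simp_all add: opc_def)

lemma hom_op[simp]: "hom (opc C) X Y = hom C Y X"
  by (auto simp: hom_def)

lemma category_op: "category C \<Longrightarrow> category (opc C)"
  unfolding category_def by (simp add: hom_def)

lemma mono_op[simp]: "mono (opc C) f = epi C f"
  unfolding mono_def epi_def by auto

lemma zero_obj_op[simp]: "zero_obj (opc C) Z = zero_obj C Z"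
  unfolding zero_obj_def by auto

lemma zero_mor_op[simp]: "zero_mor (opc C) f = zero_mor C f"
  unfolding zero_mor_def by auto

lemma kernel_op[simp]: "is_kernel (opc C) k f = is_cokernel C k f"
  unfolding is_kernel_def is_cokernel_def by simp

lemma section_op[simp]: "is_section (opc C) k = is_retraction C k"
  unfolding is_section_def is_retraction_def by simp

lemma fi_op[simp]: "fully_invariant (opc C) k = fully_coinvariant C k"
  unfolding fully_invariant_def fully_coinvariant_def by simp

lemma sr_op[simp]: "strongly_rickart (opc C) M N = dual_strongly_rickart C N M"
  unfolding strongly_rickart_def dual_strongly_rickart_def by simp

lemma abelianD:
  assumes "abelian C"
  shows "category C" "\<exists>Z. zero_obj C Z" "\<forall>f \<in> Mor C. \<exists>k. is_kernel C k f"
    "\<forall>f \<in> Mor C. \<exists>c. is_cokernel C c f" "\<forall>f. epi C f \<longrightarrow> (\<exists>g. is_cokernel C f g)"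
  using assms unfolding abelian_def by blast+

lemma cokernelD:
  assumes "is_cokernel C c f"
  shows "f \<in> Mor C" "c \<in> Mor C" "Dom C c = Cod C f" "zero_mor C (Comp C c f)"
    "\<forall>g \<in> Mor C. Dom C g = Cod C f \<longrightarrow> zero_mor C (Comp C g f) \<longrightarrow>
        (\<exists>!u. u \<in> hom C (Cod C c) (Cod C g) \<and> Comp C u c = g)"
  using assms unfolding is_cokernel_def by blast+

lemma coker_of_se:
  assumes A: "abelian C" and se: "short_exact C a b"
  shows "is_cokernel C b a"
proof -
  have C: "category C" using abelianD(1)[OF A] .
  have ab: "is_kernel C a b" and eb: "epi C b" using se unfolding short_exact_def by blast+
  obtain g where bg: "is_cokernel C b g" using abelianD(5)[OF A] eb by blast
  have bh: "b \<in> hom C (Dom C b) (Cod C b)" using kernelD(1)[OF ab] by (rule mor_hom)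
  have gh: "g \<in> hom C (Dom C g) (Dom C b)" using cokernelD(1,3)[OF bg] by (simp add: hom_def)
  have ah: "a \<in> hom C (Dom C a) (Dom C b)" using kernelD(2,3)[OF ab] by (simp add: hom_def)
  obtain t where t: "t \<in> hom C (Dom C g) (Dom C a)" "Comp C a t = g"
    using kernel_factor[OF ab bh gh cokernelD(4)[OF bg]] by blast
  have P: "\<forall>h \<in> Mor C. Dom C h = Cod C g \<longrightarrow> zero_mor C (Comp C h g) \<longrightarrow>
        (\<exists>!u. u \<in> hom C (Cod C b) (Cod C h) \<and> Comp C u b = h)" using cokernelD(5)[OF bg] .
  have cg: "Cod C g = Dom C b" using cokernelD(3)[OF bg] by simp
  have ca: "Cod C a = Dom C b" using kernelD(3)[OF ab] by simp
  show ?thesis unfolding is_cokernel_def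
  proof (intro conjI ballI impI)
    show "a \<in> Mor C" "b \<in> Mor C" "Dom C b = Cod C a" "zero_mor C (Comp C b a)"
      using kernelD[OF ab] by simp_all
    fix h assume h: "h \<in> Mor C" and dh: "Dom C h = Cod C a" and z: "zero_mor C (Comp C h a)"
    have hh: "h \<in> hom C (Dom C b) (Cod C h)" using h dh ca by (simp add: hom_def)
    have "zero_mor C (Comp C (Comp C h a) t)" using zero_comp_right[OF C z comp_hom[OF C ah hh] t(1)] .
    then have zg: "zero_mor C (Comp C h g)" using assoc[OF C t(1) ah hh] t(2) by simp
    have dg: "Dom C h = Cod C g" using dh ca cg by simp
    show "\<exists>!u. u \<in> hom C (Cod C b) (Cod C h) \<and> Comp C u b = h"
      by (rule P[rule_format, OF h dg zg])
  qed
qed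

theorem theorem2p19:
  fixes C :: "('o, 'm) cat"
  assumes "abelian C"
  shows "(\<forall>a b M. short_exact C a b \<and> M \<in> Obj C \<and>
            strongly_rickart C M (Dom C a) \<and> strongly_rickart C M (Cod C b)
            \<longrightarrow> strongly_rickart C M (Cod C a))
       \<and> (\<forall>a b N. short_exact C a b \<and> N \<in> Obj C \<and>
            dual_strongly_rickart C (Dom C a) N \<and> dual_strongly_rickart C (Cod C b) N
            \<longrightarrow> dual_strongly_rickart C (Cod C a) N)"
proof (intro conjI allI impI)
  note C = abelianD(1)[OF assms] and ZZ = abelianD(2)[OF assms]
    and ker = abelianD(3)[OF assms] and cok = abelianD(4)[OF assms]
  fix a b M
  assume h: "short_exact C a b \<and> M \<in> Obj C \<and>
            strongly_rickart C M (Dom C a) \<and> strongly_rickart C M (Cod C b)"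
  have ab: "is_kernel C a b" using h unfolding short_exact_def by blast
  show "strongly_rickart C M (Cod C a)"
    using core[OF C ZZ ker ab] h by blast
next
  note C = abelianD(1)[OF assms] and ZZ = abelianD(2)[OF assms]
    and ker = abelianD(3)[OF assms] and cok = abelianD(4)[OF assms]
  fix a b N
  assume h: "short_exact C a b \<and> N \<in> Obj C \<and>
            dual_strongly_rickart C (Dom C a) N \<and> dual_strongly_rickart C (Cod C b) N"
  have se: "short_exact C a b" using h by blast
  have ba: "is_kernel (opc C) b a" using coker_of_se[OF assms se] by simp
  have Cop: "category (opc C)" using category_op[OF C] .
  have ZZop: "\<exists>Z. zero_obj (opc C) Z" using ZZ by simp
  have kerop: "\<forall>f \<in> Mor (opc C). \<exists>k. is_kernel (opc C) k f" using cok by simp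
  have S1: "strongly_rickart (opc C) N (Dom (opc C) b)" using h by simp
  have S2: "strongly_rickart (opc C) N (Cod (opc C) a)" using h by simp
  have "strongly_rickart (opc C) N (Cod (opc C) b)" using core[OF Cop ZZop kerop ba S1 S2] .
  then have "dual_strongly_rickart C (Dom C b) N" by simp
  moreover have "Dom C b = Cod C a" using se unfolding short_exact_def by (simp add: eq_commute)
  ultimately show "dual_strongly_rickart C (Cod C a) N" by simp
qed

end
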